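(* Let $\langle X,\tau\rangle$ be a first-countable Hausdorff space containing $[0,1)$ as a dense and co-dense subset whose subspace topology is the Sorgenfrey topology on $[0,1)$. For $U\subseteq X$ write $\breve U=U\cap[0,1)$. For $z\in X\setminus[0,1)$ let $\mathsf L(z)$ be the set of $x\in[0,1]$ such that some sequence in $[0,1)$ converges to $z$ in $\langle X,\tau\rangle$ and to $x$ in the Euclidean topology of $[0,1]$; let $\mathsf m(z)=\min\mathsf L(z)$ (which exists since $\mathsf L(z)$ is nonempty and well-ordered by $<$) and $\mathsf M(z)=\sup\mathsf L(z)$. Let $z\in X\setminus[0,1)$ and $a<b$ reals. Then: (i) there is an open neighborhood $U$ of $z$ with $y<\mathsf M(z)$ for all $y\in\breve U$; (ii) for every open neighborhood $U$ of $z$ with $\breve U=[a,b)$ we have $\mathsf M(z)\le b$; (iii) for every $x\in[0,1)$ with $x<\mathsf m(z)$ there is an open neighborhood $U$ of $z$ with $x<y$ for all $y\in\breve U$; (iv) for every $x\in[0,1)$ and every open neighborhood $U$ of $z$, if $x<y$ for all $y\in\breve U$ then $x<\mathsf m(z)$; (v) every open neighborhood $U$ of $z$ contains some $x\in\breve U$ with $x<\mathsf m(z)$.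
   Context: The Sorgenfrey topology on $[0,1)$ is generated by the sets $[a,b)\cap[0,1)$. A subset is co-dense if its complement is dense. *)

theory Defs
  imports "HOL-Analysis.Analysis"
begin

definition sorgenfrey01 :: "real topology" where
  "sorgenfrey01 = topology_generated_by {{a..<b} \<inter> {0..<1} | a b. True}"

text \<open>The copy of [0,1) inside X is the image under the embedding e.
  breve U: the real coordinates of U \<inter> [0,1).\<close>
definition breve :: "(real \<Rightarrow> 'a) \<Rightarrow> 'a set \<Rightarrow> real set" where
  "breve e U = {y \<in> {0..<1}. e y \<in> U}"

definition Lset :: "'a topology \<Rightarrow> (real \<Rightarrow> 'a) \<Rightarrow> 'a \<Rightarrow> real set" where
  "Lset X e z = {x \<in> {0..1}. \<exists>s :: nat \<Rightarrow> real. (\<forall>n. s n \<in> {0..<1})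
      \<and> limitin X (\<lambda>n. e (s n)) z sequentially \<and> s \<longlonglongrightarrow> x}"

definition minL :: "'a topology \<Rightarrow> (real \<Rightarrow> 'a) \<Rightarrow> 'a \<Rightarrow> real" where
  "minL X e z = (LEAST x. x \<in> Lset X e z)"

definition MaxL :: "'a topology \<Rightarrow> (real \<Rightarrow> 'a) \<Rightarrow> 'a \<Rightarrow> real" where
  "MaxL X e z = Sup (Lset X e z)"

end

theory Submission
  imports Defs
begin

lemma sorg_open_nbhd:
  assumes "openin sorgenfrey01 U" "x \<in> U"
  shows "\<exists>\<epsilon>>0. \<forall>y. x \<le> y \<and> y < x+\<epsilon> \<and> y < 1 \<longrightarrow> y \<in> U"
proof -
  have "generate_topology_on {{a..<b} \<inter> {0..<1} | a b. True} U"
    using assms(1) unfolding sorgenfrey01_def by (simp add: openin_topology_generated_by_iff)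
  then show ?thesis using assms(2)
  proof (induction arbitrary: x)
    case Empty then show ?case by simp
  next
    case (Int a b)
    from Int.IH(1)[of x] Int.prems obtain e1 where "e1 > 0" "\<forall>y. x \<le> y \<and> y < x+e1 \<and> y < 1 \<longrightarrow> y \<in> a" by auto
    moreover from Int.IH(2)[of x] Int.prems obtain e2 where "e2 > 0" "\<forall>y. x \<le> y \<and> y < x+e2 \<and> y < 1 \<longrightarrow> y \<in> b" by auto
    ultimately show ?case by (intro exI[of _ "min e1 e2"]) auto
  next
    case (UN K)
    then obtain k where "k\<in>K" "x\<in>k" by auto
    with UN.IH obtain \<epsilon> where "\<epsilon>>0" "\<forall>y. x \<le> y \<and> y < x+\<epsilon> \<and> y < 1 \<longrightarrow> y \<in> k" by blast
    then show ?case using \<open>k\<in>K\<close> by blast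
  next
    case (Basis s)
    then obtain a b where s: "s = {a..<b} \<inter> {0..<1}" by auto
    show ?case using Basis.prems s by (intro exI[of _ "b - x"]) auto
  qed
qed

lemma sorg_lim:
  assumes "x \<in> {0..<1}" "\<forall>n. s n \<in> {0..<1}" "\<forall>n. x \<le> s n" "s \<longlonglongrightarrow> x"
  shows "limitin sorgenfrey01 s x sequentially"
  unfolding limitin_sequentially
proof (intro conjI allI impI)
  have "openin sorgenfrey01 ({x..<1} \<inter> {0..<1})"
    unfolding sorgenfrey01_def openin_topology_generated_by_iff
    by (rule generate_topology_on.Basis) blast
  then show "x \<in> topspace sorgenfrey01" using assms(1) openin_subset by fastforce
  fix U assume "openin sorgenfrey01 U \<and> x \<in> U"
  then obtain \<epsilon> where "\<epsilon>>0" and H: "\<forall>y. x \<le> y \<and> y < x+\<epsilon> \<and> y < 1 \<longrightarrow> y \<in> U"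
    using sorg_open_nbhd by blast
  from LIMSEQ_D[OF assms(4) \<open>\<epsilon>>0\<close>] obtain N where "\<forall>n\<ge>N. norm (s n - x) < \<epsilon>" by blast
  then show "\<exists>N. \<forall>n\<ge>N. s n \<in> U" using H assms(2,3)
    by (metis abs_of_nonneg atLeastLessThan_iff diff_ge_0_iff_ge diff_less_eq add.commute real_norm_def)
qed

theorem mainTheorem14:
  fixes X :: "'a topology" and e :: "real \<Rightarrow> 'a" and z :: 'a and a b :: real
  assumes "first_countable X" and "Hausdorff_space X"
    and "e ` {0..<1} \<subseteq> topspace X"
    and "homeomorphic_map sorgenfrey01 (subtopology X (e ` {0..<1})) e"
    and "X closure_of (e ` {0..<1}) = topspace X"
    and "X closure_of (topspace X - e ` {0..<1}) = topspace X"
    and "z \<in> topspace X - e ` {0..<1}"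
    and "a < b"
  shows "(\<exists>U. openin X U \<and> z \<in> U \<and> (\<forall>y \<in> breve e U. y < MaxL X e z))
    \<and> (\<forall>U. openin X U \<and> z \<in> U \<and> breve e U = {a..<b} \<longrightarrow> MaxL X e z \<le> b)
    \<and> (\<forall>x \<in> {0..<1}. x < minL X e z \<longrightarrow>
          (\<exists>U. openin X U \<and> z \<in> U \<and> (\<forall>y \<in> breve e U. x < y)))
    \<and> (\<forall>x \<in> {0..<1}. \<forall>U. openin X U \<and> z \<in> U \<and> (\<forall>y \<in> breve e U. x < y)
          \<longrightarrow> x < minL X e z)
    \<and> (\<forall>U. openin X U \<and> z \<in> U \<longrightarrow> (\<exists>x \<in> breve e U. x < minL X e z))"
proof -
  define L where "L = Lset X e z"
  have zX: "z \<in> topspace X" and zT: "z \<notin> e ` {0..<1}" using assms(7) by auto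
  have cont: "continuous_map sorgenfrey01 X e"
  proof -
    have "continuous_map sorgenfrey01 (subtopology X (e ` {0..<1})) e"
      by (rule homeomorphic_imp_continuous_map[OF assms(4)])
    then show ?thesis by (simp add: continuous_map_in_subtopology)
  qed
  have E: False if "x \<in> {0..<1}" "\<forall>n. s n \<in> {0..<1}" "\<forall>n\<ge>N. x \<le> s n" "s \<longlonglongrightarrow> x"
      "limitin X (\<lambda>n. e (s n)) z sequentially" for x s N
  proof -
    define s' where "s' = (\<lambda>n. s (n + N))"
    have "limitin sorgenfrey01 s' x sequentially"
      unfolding s'_def using that(1,2,3) LIMSEQ_ignore_initial_segment[OF that(4), of N]
      by (intro sorg_lim) auto
    from continuous_map_limit[OF cont this] have l1: "limitin X (e \<circ> s') (e x) sequentially" .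
    have l2: "limitin X (e \<circ> s') z sequentially"
      using limitin_sequentially_offset[OF that(5), of N] unfolding s'_def o_def .
    have "z = e x" by (rule limitin_Hausdorff_unique[OF l2 l1 trivial_limit_sequentially assms(2)])
    then show False using zT that(1) by blast
  qed
  obtain \<B> where cB: "countable \<B>" and oB: "\<forall>V\<in>\<B>. openin X V"
    and bB: "\<forall>U. openin X U \<and> z \<in> U \<longrightarrow> (\<exists>V\<in>\<B>. z \<in> V \<and> V \<subseteq> U)"
    using bspec[OF assms(1)[unfolded first_countable_def] zX] by (elim exE conjE) blast
  define \<B>' where "\<B>' = {V\<in>\<B>. z \<in> V}"
  have cB': "countable \<B>'" using cB unfolding \<B>'_def by simp
  have neB': "\<B>' \<noteq> {}"
  proof -
    obtain V where "V \<in> \<B>" "z \<in> V" using bB zX openin_topspace by blast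
    then show ?thesis unfolding \<B>'_def by blast
  qed
  define g where "g = from_nat_into \<B>'"
  have rg: "range g = \<B>'" unfolding g_def using range_from_nat_into[OF neB' cB'] .
  define B where "B n = \<Inter> (g ` {..n})" for n
  have oBn: "openin X (B n)" for n
    unfolding B_def using rg oB \<B>'_def by (intro openin_Inter) auto
  have zB: "z \<in> B n" for n unfolding B_def using rg \<B>'_def by auto
  have Bmono: "B m \<subseteq> B n" if "n \<le> m" for m n unfolding B_def using that by auto
  have Bbase: "\<exists>k. B k \<subseteq> U" if "openin X U" "z \<in> U" for U
  proof -
    from bB[rule_format, OF conjI[OF that]] obtain V where V: "V \<in> \<B>" "z \<in> V" "V \<subseteq> U"
      by (elim bexE conjE) blast
    have "V \<in> \<B>'" unfolding \<B>'_def using V(1,2) by simp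
    then have "V \<in> range g" using rg by simp
    then obtain k where k: "V = g k" by (rule rangeE)
    have "B k \<subseteq> g k" unfolding B_def by (rule INT_lower) simp
    then have "B k \<subseteq> U" using V(3) k by simp
    then show ?thesis by (rule exI)
  qed
  have Blim: "limitin X f z sequentially" if "\<forall>n. f n \<in> B n" for f
    unfolding limitin_sequentially
  proof (intro conjI allI impI)
    show "z \<in> topspace X" by (rule zX)
    fix U assume U: "openin X U \<and> z \<in> U"
    obtain k where "B k \<subseteq> U" using Bbase[OF conjunct1[OF U] conjunct2[OF U]] by (elim exE)
    show "\<exists>N. \<forall>n\<ge>N. f n \<in> U"
    proof (intro exI allI impI)
      fix n assume "k \<le> n"
      show "f n \<in> U" using subsetD[OF \<open>B k \<subseteq> U\<close> subsetD[OF Bmono[OF \<open>k \<le> n\<close>] that[rule_format, of n]]] .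
    qed
  qed
  have D: "\<exists>r w. strict_mono r \<and> (s \<circ> r) \<longlonglongrightarrow> w \<and> w \<in> L"
    if "\<forall>n. s n \<in> {0..<1}" "limitin X (\<lambda>n. e (s n)) z sequentially" for s
  proof -
    have sc: "seq_compact {0..1::real}" by (rule compact_imp_seq_compact) simp
    have s01: "\<And>n. s n \<in> {0..1}" using that(1) by (simp add: less_imp_le)
    obtain w r where w: "w \<in> {0..1}" "strict_mono r" "(s \<circ> r) \<longlonglongrightarrow> w"
      using mp[OF spec[OF sc[unfolded seq_compact_def], of s] allI[OF s01]] by (elim bexE exE conjE) blast
    have "limitin X ((\<lambda>n. e (s n)) \<circ> r) z sequentially"
      using limitin_subsequence[OF w(2) that(2)] .
    then have "limitin X (\<lambda>n. e ((s \<circ> r) n)) z sequentially" by (simp add: o_def)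
    then have "w \<in> L" unfolding L_def Lset_def mem_Collect_eq using w(1,3) that(1)
      by (intro conjI exI[of _ "s \<circ> r"]) (simp_all add: o_def)
    then show ?thesis using w by blast
  qed
  have pick: "\<exists>t. \<forall>n. t n \<in> breve e (B n) \<and> P n (t n)"
    if "\<forall>n. \<exists>y\<in>breve e (B n). P n y" for P
    using that unfolding Bex_def by (rule choice)
  have breve01: "breve e U \<subseteq> {0..<1}" for U unfolding breve_def by auto
  have breveB: "e y \<in> B n" if "y \<in> breve e (B n)" for y n using that unfolding breve_def by auto
  have seqL: "\<exists>r w. strict_mono r \<and> ((t \<circ> r) \<longlonglongrightarrow> w) \<and> w \<in> L"
    if "\<forall>n. t n \<in> breve e (B n)" for t
  proof -
    have "\<forall>n. t n \<in> {0..<1}" using that breve01 by blast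
    moreover have "limitin X (\<lambda>n. e (t n)) z sequentially" using that breveB by (intro Blim) auto
    ultimately show ?thesis using D by blast
  qed
  have Lsub: "L \<subseteq> {0..1}" unfolding L_def Lset_def by auto
  have Lne: "L \<noteq> {}"
  proof -
    have "\<forall>n. \<exists>y\<in>breve e (B n). True"
    proof
      fix n
      have "z \<in> X closure_of (e ` {0..<1})" using assms(5) zX by simp
      then obtain y where "y \<in> e ` {0..<1}" "y \<in> B n" using oBn zB unfolding in_closure_of by blast
      then show "\<exists>y\<in>breve e (B n). True" unfolding breve_def by auto
    qed
    then obtain t where "\<forall>n. t n \<in> breve e (B n)" using pick[of "\<lambda>_ _. True"] by auto
    then show ?thesis using seqL by blast
  qed
  have bddA: "bdd_above L" using bdd_above_mono[OF bdd_above_Icc Lsub] .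
  have bddB: "bdd_below L" using bdd_below_mono[OF bdd_below_Icc Lsub] .
  define i where "i = Inf L"
  have iL: "i \<in> L"
  proof -
    have "\<forall>n. \<exists>y\<in>breve e (B n). y < i + inverse (real (Suc n))"
    proof
      fix n
      define d where "d = inverse (real (Suc n))"
      have d: "d > 0" unfolding d_def by simp
      obtain x where "x \<in> L" "x < i + d/2" using cInf_lessD[OF Lne, of "i + d/2"] d unfolding i_def by auto
      then obtain s where s: "\<forall>n. s n \<in> {0..<1}" "limitin X (\<lambda>n. e (s n)) z sequentially" "s \<longlonglongrightarrow> x"
        unfolding L_def Lset_def by auto
      obtain N1 where N1: "\<forall>k\<ge>N1. e (s k) \<in> B n" using s(2) oBn zB unfolding limitin_sequentially by blast
      obtain N2 where N2: "\<forall>k\<ge>N2. norm (s k - x) < d/2" using LIMSEQ_D[OF s(3), of "d/2"] d by auto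
      define k where "k = max N1 N2"
      have "s k \<in> breve e (B n)" using N1 s(1) unfolding breve_def k_def by auto
      moreover have "s k < i + d"
      proof -
        have "norm (s k - x) < d/2" using N2 unfolding k_def by simp
        then show ?thesis using \<open>x < i + d/2\<close> unfolding real_norm_def by arith
      qed
      ultimately show "\<exists>y\<in>breve e (B n). y < i + inverse (real (Suc n))" unfolding d_def by blast
    qed
    then obtain t where t: "\<forall>n. t n \<in> breve e (B n) \<and> t n < i + inverse (real (Suc n))"
      using pick[of "\<lambda>n y. y < i + inverse (real (Suc n))"] by blast
    then obtain r w where rw: "strict_mono r" "(t \<circ> r) \<longlonglongrightarrow> w" "w \<in> L" using seqL by blast
    have le: "(t \<circ> r) n \<le> i + inverse (real (Suc n))" for n
    proof -
      have "n \<le> r n" using seq_suble[OF rw(1)] .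
      then have "inverse (real (Suc (r n))) \<le> inverse (real (Suc n))"
        by (simp add: le_imp_inverse_le)
      moreover have "t (r n) < i + inverse (real (Suc (r n)))" using t by blast
      ultimately show ?thesis unfolding o_def by linarith
    qed
    have lim2: "(\<lambda>n. i + inverse (real (Suc n))) \<longlonglongrightarrow> i"
      using tendsto_add[OF tendsto_const LIMSEQ_inverse_real_of_nat, of i] by simp
    have "w \<le> i" using LIMSEQ_le[OF rw(2) lim2] le by blast
    moreover have "i \<le> w" unfolding i_def using cInf_lower[OF rw(3) bddB] .
    ultimately show ?thesis using rw(3) by simp
  qed
  have imin: "\<forall>y\<in>L. i \<le> y" unfolding i_def using cInf_lower bddB by blast
  have mL: "minL X e z = i" unfolding minL_def L_def[symmetric]
    using Least_equality[of "\<lambda>x. x \<in> L" i] iL imin by blast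
  have MaxLeq: "MaxL X e z = Sup L" unfolding MaxL_def L_def ..
  have P1: "\<exists>U. openin X U \<and> z \<in> U \<and> (\<forall>y \<in> breve e U. y < MaxL X e z)"
  proof (rule ccontr)
    assume NT: "\<not> ?thesis"
    have "\<forall>n. \<exists>y\<in>breve e (B n). Sup L \<le> y"
    proof
      fix n
      from NT have "\<not> (\<forall>y\<in>breve e (B n). y < MaxL X e z)" using oBn zB by blast
      then show "\<exists>y\<in>breve e (B n). Sup L \<le> y" using MaxLeq by (auto simp: not_less)
    qed
    then obtain t where t: "\<forall>n. t n \<in> breve e (B n) \<and> Sup L \<le> t n"
      using pick[of "\<lambda>n y. Sup L \<le> y"] by blast
    then obtain r w where rw: "strict_mono r" "(t \<circ> r) \<longlonglongrightarrow> w" "w \<in> L" using seqL by blast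
    have "w \<le> Sup L" using cSup_upper[OF rw(3) bddA] .
    moreover have "Sup L \<le> w" using LIMSEQ_le_const[OF rw(2)] t by auto
    ultimately have wS: "w = Sup L" by simp
    have t01: "\<forall>n. (t \<circ> r) n \<in> {0..<1}"
    proof
      fix n
      have "t (r n) \<in> breve e (B (r n))" using t by blast
      then show "(t \<circ> r) n \<in> {0..<1}" unfolding o_def by (rule subsetD[OF breve01])
    qed
    have "t (r 0) < 1" using t01 by (simp add: o_def)
    moreover have "Sup L \<le> t (r 0)" using t by blast
    ultimately have "w < 1" using wS by linarith
    moreover have "0 \<le> w" using rw(3) Lsub by auto
    moreover have "limitin X (\<lambda>n. e ((t \<circ> r) n)) z sequentially"
    proof (rule Blim, rule allI)
      fix n
      show "e ((t \<circ> r) n) \<in> B n"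
        using breveB[of "t (r n)" "r n"] t Bmono[OF seq_suble[OF rw(1)], of n] by auto
    qed
    ultimately show False
      using E[of w "t \<circ> r" 0] t01 t wS rw(2) by auto
  qed
  have P2: "\<forall>U. openin X U \<and> z \<in> U \<and> breve e U = {a..<b} \<longrightarrow> MaxL X e z \<le> b"
  proof (intro allI impI)
    fix U assume U: "openin X U \<and> z \<in> U \<and> breve e U = {a..<b}"
    show "MaxL X e z \<le> b" unfolding MaxLeq
    proof (rule cSup_least[OF Lne])
      fix x assume "x \<in> L"
      then obtain s where s: "\<forall>n. s n \<in> {0..<1}" "limitin X (\<lambda>n. e (s n)) z sequentially" "s \<longlonglongrightarrow> x"
        unfolding L_def Lset_def by auto
      obtain N where "\<forall>k\<ge>N. e (s k) \<in> U" using s(2) U unfolding limitin_sequentially by blast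
      then have "\<forall>k\<ge>N. s k \<in> breve e U" using s(1) unfolding breve_def by auto
      then have "\<forall>k\<ge>N. s k \<le> b" using U by auto
      then show "x \<le> b" using LIMSEQ_le_const2[OF s(3)] by blast
    qed
  qed
  have P3: "\<forall>x \<in> {0..<1}. x < minL X e z \<longrightarrow>
          (\<exists>U. openin X U \<and> z \<in> U \<and> (\<forall>y \<in> breve e U. x < y))"
  proof (intro ballI impI)
    fix x :: real assume x: "x \<in> {0..<1}" "x < minL X e z"
    show "\<exists>U. openin X U \<and> z \<in> U \<and> (\<forall>y \<in> breve e U. x < y)"
    proof (rule ccontr)
      assume NT: "\<not> ?thesis"
      have "\<forall>n. \<exists>y\<in>breve e (B n). y \<le> x"
      proof
        fix n
        from NT have "\<not> (\<forall>y\<in>breve e (B n). x < y)" using oBn zB by blast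
        then show "\<exists>y\<in>breve e (B n). y \<le> x" by (auto simp: not_less)
      qed
      then obtain t where t: "\<forall>n. t n \<in> breve e (B n) \<and> t n \<le> x"
        using pick[of "\<lambda>n y. y \<le> x"] by blast
      then obtain r w where rw: "strict_mono r" "(t \<circ> r) \<longlonglongrightarrow> w" "w \<in> L" using seqL by blast
      have "w \<le> x" using LIMSEQ_le_const2[OF rw(2)] t by auto
      moreover have "i \<le> w" using imin rw(3) by blast
      ultimately show False using x mL by simp
    qed
  qed
  obtain sm where sm: "\<forall>n. sm n \<in> {0..<1}" "limitin X (\<lambda>n. e (sm n)) z sequentially" "sm \<longlonglongrightarrow> i"
  proof -
    have "\<exists>s. (\<forall>n. s n \<in> {0..<1}) \<and> limitin X (\<lambda>n. e (s n)) z sequentially \<and> s \<longlonglongrightarrow> i"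
      using iL unfolding L_def Lset_def by simp
    then show ?thesis using that by (elim exE conjE) blast
  qed
  have i0: "0 \<le> i" using iL Lsub by auto
  have evU: "\<exists>N. \<forall>k\<ge>N. sm k \<in> breve e U" if UU: "openin X U" "z \<in> U" for U
  proof -
    obtain N where N: "\<forall>k\<ge>N. e (sm k) \<in> U"
      using conjunct2[OF sm(2)[unfolded limitin_sequentially], rule_format, OF conjI[OF UU]] by (elim exE)
    show ?thesis
    proof (intro exI allI impI)
      fix k assume "N \<le> k"
      then show "sm k \<in> breve e U" using N sm(1) unfolding breve_def by simp
    qed
  qed
  have P4: "\<forall>x \<in> {0..<1}. \<forall>U. openin X U \<and> z \<in> U \<and> (\<forall>y \<in> breve e U. x < y)
          \<longrightarrow> x < minL X e z"
  proof (intro ballI allI impI)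
    fix x :: real and U assume x: "x \<in> {0..<1}" and U: "openin X U \<and> z \<in> U \<and> (\<forall>y \<in> breve e U. x < y)"
    obtain N where N: "\<forall>k\<ge>N. sm k \<in> breve e U" using evU U by blast
    then have N': "\<forall>k\<ge>N. x < sm k" using U by blast
    have "\<forall>k\<ge>N. x \<le> sm k" using N' by (simp add: less_imp_le)
    then have "x \<le> i" using LIMSEQ_le_const[OF sm(3)] by blast
    moreover have "x \<noteq> i"
    proof
      assume "x = i"
      then show False using E[of i sm N] x sm N' less_imp_le by auto
    qed
    ultimately show "x < minL X e z" using mL by simp
  qed
  have P5: "\<forall>U. openin X U \<and> z \<in> U \<longrightarrow> (\<exists>x \<in> breve e U. x < minL X e z)"
  proof (intro allI impI)
    fix U assume U: "openin X U \<and> z \<in> U"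
    show "\<exists>x \<in> breve e U. x < minL X e z"
    proof (rule ccontr)
      assume "\<not> ?thesis"
      then have H: "\<forall>y\<in>breve e U. i \<le> y" using mL by auto
      obtain N where N: "\<forall>k\<ge>N. sm k \<in> breve e U" using evU U by blast
      then have N': "\<forall>k\<ge>N. i \<le> sm k" using H by blast
      have "i < 1" using N' sm(1) by (meson atLeastLessThan_iff le_less_trans order_refl)
      then show False using E[of i sm N] i0 sm N' by auto
    qed
  qed
  show ?thesis using P1 P2 P3 P4 P5 by blast
qed

end
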